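(* Let $V=\{n\in\mathbb{Z} : n\geq 2,\ 5\nmid n\}$ and let $\Gamma_5$ be the directed graph on $V$ with up-edges $(n,(n+5)^2)$ and down-edges $(n^2,n)$ for $n\in V$. Let $B$ be a square-to-square conveyor belt path in $\Gamma_5$ consisting of fewer than $150$ steps, i.e. of the form $(UD)^i$ with $1\leq i<75$. (a) If the vertices $v_0,v_1,\dots,v_i$ of $B$ are congruent to $1$ modulo $5$, then its endpoint $v_i$ is at most $91^2$. (b) If these vertices are congruent to $4$ modulo $5$, then its endpoint $v_i$ is at most $183^2$.
   Context: A conveyor belt is a path in $\Gamma_5$ whose edge labels are $UD\,UD\cdots UD$ ($U$ = up-edge, $D$ = down-edge), i.e. $(UD)^i$ for some $i\geq 1$; it has $2i$ steps. Each $UD$ step takes a vertex $v$ to $(v+5)^2$ and then to $v+5$, so the belt visits $v_0, (v_0+5)^2, v_0+5, \dots$; write $v_j=v_0+5j$ for the vertices reached after each $UD$ step, so it begins at $v_0$ and ends at $v_i=v_0+5i$, and all $v_j$ are congruent modulo $5$. A conveyor belt is square-to-square if both its starting vertex $v_0$ and its ending vertex $v_i$ are perfect squares. *)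

theory Defs
  imports Main
begin

definition V5 :: "int set" where
  "V5 = {n. n \<ge> 2 \<and> \<not> (5 dvd n)}"

definition up_edge :: "int \<Rightarrow> int \<Rightarrow> bool" where
  "up_edge a b \<longleftrightarrow> a \<in> V5 \<and> b = (a + 5)^2"

definition down_edge :: "int \<Rightarrow> int \<Rightarrow> bool" where
  "down_edge a b \<longleftrightarrow> b \<in> V5 \<and> a = b^2"

definition conveyor_belt :: "int list \<Rightarrow> nat \<Rightarrow> bool" where
  "conveyor_belt w i \<longleftrightarrow> i \<ge> 1 \<and> length w = 2 * i + 1 \<and> (\<forall>x \<in> set w. x \<in> V5) \<and>
     (\<forall>k < 2 * i. (even k \<longrightarrow> up_edge (w ! k) (w ! (k + 1))) \<and>
                  (odd k \<longrightarrow> down_edge (w ! k) (w ! (k + 1))))"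

definition is_square :: "int \<Rightarrow> bool" where
  "is_square n \<longleftrightarrow> (\<exists>m. n = m^2)"

definition square_to_square :: "int list \<Rightarrow> nat \<Rightarrow> bool" where
  "square_to_square w i \<longleftrightarrow> conveyor_belt w i \<and> is_square (w ! 0) \<and> is_square (w ! (2 * i))"

end

theory Submission
  imports Defs
begin

lemma step_eq:
  assumes "conveyor_belt w i" "j < i"
  shows "w ! (2*j+2) = w ! (2*j) + 5"
proof -
  have len: "length w = 2*i+1" using assms unfolding conveyor_belt_def by auto
  have u: "up_edge (w ! (2*j)) (w ! (2*j+1))"
  proof -
    have "2*j < 2*i" "even (2*j)" using assms(2) by auto
    thus ?thesis using assms(1) unfolding conveyor_belt_def by blast
  qed
  have d: "down_edge (w ! (2*j+1)) (w ! (2*j+2))"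
  proof -
    have "2*j+1 < 2*i" "odd (2*j+1)" using assms(2) by auto
    hence "down_edge (w ! (2*j+1)) (w ! (2*j+1+1))" using assms(1) unfolding conveyor_belt_def by blast
    thus ?thesis by (simp add: add.assoc)
  qed
  have "w ! (2*j+2) \<in> V5" using d unfolding down_edge_def by auto
  hence p1: "w ! (2*j+2) \<ge> 0" unfolding V5_def by auto
  have "w ! (2*j) \<in> V5" using u unfolding up_edge_def by auto
  hence p2: "w ! (2*j) + 5 \<ge> 0" unfolding V5_def by auto
  have "(w ! (2*j+2))^2 = (w ! (2*j) + 5)^2" using u d unfolding up_edge_def down_edge_def by auto
  thus ?thesis using p1 p2 by (simp add: power2_eq_iff_nonneg)
qed

lemma walk_eq:
  assumes "conveyor_belt w i" "j \<le> i"
  shows "w ! (2*j) = w ! 0 + 5 * int j"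
  using assms(2)
proof (induction j)
  case 0 then show ?case by simp
next
  case (Suc j)
  have "w ! (2*Suc j) = w ! (2*j+2)" by simp
  also have "\<dots> = w ! (2*j) + 5" using step_eq[OF assms(1)] Suc by simp
  finally show ?case using Suc by simp
qed

lemma sq_mod1: fixes b :: int assumes "b \<ge> 0" "b^2 mod 5 = 1" shows "b mod 5 = 1 \<or> b mod 5 = 4"
proof -
  have e: "b^2 mod 5 = (b mod 5)^2 mod 5" by (simp add: power_mod)
  have "b mod 5 \<in> {0,1,2,3,4}" by auto
  thus ?thesis using assms e by auto
qed

lemma sq_mod4: fixes b :: int assumes "b \<ge> 0" "b^2 mod 5 = 4" shows "b mod 5 = 2 \<or> b mod 5 = 3"
proof -
  have e: "b^2 mod 5 = (b mod 5)^2 mod 5" by (simp add: power_mod)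
  have "b mod 5 \<in> {0,1,2,3,4}" by auto
  thus ?thesis using assms e by auto
qed

lemma part_a:
  fixes a b :: int
  assumes "a \<ge> 0" "b \<ge> 0" "b^2 - a^2 > 0" "b^2 - a^2 \<le> 370"
    "a^2 mod 5 = 1" "b^2 mod 5 = 1"
  shows "b \<le> 91"
proof (rule ccontr)
  assume "\<not> b \<le> 91"
  hence b: "b \<ge> 92" by simp
  have f: "b^2 - a^2 = (b-a)*(b+a)" by (simp add: power2_eq_square algebra_simps)
  have ba: "b > a"
  proof (rule ccontr)
    assume "\<not> b > a"
    hence "b^2 \<le> a^2" using assms(2) by (intro power_mono) auto
    thus False using assms(3) by linarith
  qed
  have "(b-a)*92 \<le> (b-a)*(b+a)" using ba b assms(1) by (intro mult_left_mono) auto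
  hence "(b-a)*92 \<le> 370" using f assms(4) by linarith
  hence "b - a \<le> 4" by (simp add: algebra_simps)
  hence "b + a \<ge> 180" using b by linarith
  hence "(b-a)*180 \<le> (b-a)*(b+a)" using ba by (intro mult_left_mono) auto
  hence "(b-a)*180 \<le> 370" using f assms(4) by linarith
  hence d: "b - a \<le> 2" by (simp add: algebra_simps)
  have mb: "b mod 5 = 1 \<or> b mod 5 = 4" using sq_mod1[OF assms(2) assms(6)] .
  have ma: "a mod 5 = 1 \<or> a mod 5 = 4" using sq_mod1[OF assms(1) assms(5)] .
  show False
  proof (cases "b - a = 1")
    case True
    hence "b = a + 1" by linarith
    hence "b mod 5 = (a mod 5 + 1) mod 5" by (simp add: mod_add_left_eq)
    then show ?thesis using ma mb by auto
  next
    case False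
    hence "b = a + 2" using d ba by linarith
    hence "(b-a)*(b+a) = 4*a+4" by simp
    hence "a \<le> 91" using f assms(4) by linarith
    hence "b \<le> 93" using \<open>b = a+2\<close> by simp
    hence "b = 92 \<or> b = 93" using b by linarith
    thus False using mb by auto
  qed
qed

lemma part_b:
  fixes a b :: int
  assumes "a \<ge> 0" "b \<ge> 0" "b^2 - a^2 > 0" "b^2 - a^2 \<le> 370"
    "b^2 mod 5 = 4"
  shows "b \<le> 183"
proof (rule ccontr)
  assume "\<not> b \<le> 183"
  hence b: "b \<ge> 184" by simp
  have f: "b^2 - a^2 = (b-a)*(b+a)" by (simp add: power2_eq_square algebra_simps)
  have ba: "b > a"
  proof (rule ccontr)
    assume "\<not> b > a"
    hence "b^2 \<le> a^2" using assms(2) by (intro power_mono) auto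
    thus False using assms(3) by linarith
  qed
  have "(b-a)*184 \<le> (b-a)*(b+a)" using ba b assms(1) by (intro mult_left_mono) auto
  hence "(b-a)*184 \<le> 370" using f assms(4) by linarith
  hence "b - a \<le> 2" by (simp add: algebra_simps)
  hence "b + a \<ge> 366" using b by linarith
  hence "(b-a)*366 \<le> (b-a)*(b+a)" using ba by (intro mult_left_mono) auto
  hence "(b-a)*366 \<le> 370" using f assms(4) by linarith
  hence d: "b - a = 1" using ba by (simp add: algebra_simps)
  hence "(b-a)*(b+a) = 2*b - 1" by simp
  hence "b \<le> 185" using f assms(4) by linarith
  hence "b = 184 \<or> b = 185" using b by linarith
  moreover have "b mod 5 = 2 \<or> b mod 5 = 3" using sq_mod4[OF assms(2) assms(5)] .
  ultimately show False by auto
qed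

theorem lemma11:
  fixes w :: "int list" and i :: nat
  assumes "square_to_square w i"
    and "1 \<le> i" and "i < 75"
  shows "((\<forall>j \<le> i. w ! (2 * j) mod 5 = 1) \<longrightarrow> w ! (2 * i) \<le> 91^2) \<and>
         ((\<forall>j \<le> i. w ! (2 * j) mod 5 = 4) \<longrightarrow> w ! (2 * i) \<le> 183^2)"
proof -
  have cb: "conveyor_belt w i" using assms unfolding square_to_square_def by auto
  obtain a0 where a0: "w ! 0 = a0^2" using assms unfolding square_to_square_def is_square_def by auto
  obtain b0 where b0: "w ! (2*i) = b0^2" using assms unfolding square_to_square_def is_square_def by auto
  define a where "a = \<bar>a0\<bar>"
  define b where "b = \<bar>b0\<bar>"
  have A: "w ! 0 = a^2" "a \<ge> 0" using a0 a_def by auto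
  have B: "w ! (2*i) = b^2" "b \<ge> 0" using b0 b_def by auto
  have e: "w ! (2*i) = w ! 0 + 5 * int i" using walk_eq[OF cb] by simp
  have d1: "b^2 - a^2 > 0" using e A B assms(2) by simp
  have d2: "b^2 - a^2 \<le> 370" using e A B assms(3) by simp
  show ?thesis
  proof (intro conjI impI)
    assume h: "\<forall>j \<le> i. w ! (2 * j) mod 5 = 1"
    have "a^2 mod 5 = 1" using h[rule_format, of 0] A by simp
    moreover have "b^2 mod 5 = 1" using h[rule_format, of i] B by simp
    ultimately have "b \<le> 91" using part_a A B d1 d2 by blast
    hence "b^2 \<le> 91^2" using B by (intro power_mono) auto
    thus "w ! (2 * i) \<le> 91^2" using B by simp
  next
    assume h: "\<forall>j \<le> i. w ! (2 * j) mod 5 = 4"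
    have "b^2 mod 5 = 4" using h[rule_format, of i] B by simp
    hence "b \<le> 183" using part_b A B d1 d2 by blast
    hence "b^2 \<le> 183^2" using B by (intro power_mono) auto
    thus "w ! (2 * i) \<le> 183^2" using B by simp
  qed
qed

end
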